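(* Let $S$ be a compact, metrizable, separable space, let $A$ be the generator of a Feller semigroup on $C(S)$ with resolvent $R_\lambda=(\lambda-A)^{-1}$, and let $\ell_\lambda$, $\lambda>0$, be the Laplace transform of an exit law for $A$. Then $\lim_{\lambda\to\infty}\ell_\lambda=0$ in the norm of $C(S)$.
   Context: A Feller semigroup is a strongly continuous semigroup of positive contractions on $C(S)$ (real continuous functions, sup norm) with $T(0)=I$, not necessarily conservative. A family $\ell_\lambda$, $\lambda>0$, is the Laplace transform of an exit law for $A$ if: (a) $(0,\infty)\ni\lambda\mapsto\ell_\lambda\in C(S)$ is locally bounded, non-negative and $\ell_\lambda\neq0$ for at least one $\lambda$; (b) $\lim_{\lambda\to0+}\ell_\lambda(x)\le1$ for each $x\in S$; (c) $(\lambda-\mu)R_\lambda\ell_\mu=\ell_\mu-\ell_\lambda$ for all $\lambda,\mu>0$. *)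

theory Defs
  imports "HOL-Analysis.Analysis"
begin

text \<open>C(S) is modelled as the Banach space of (bounded) continuous real functions
  with the sup norm; on a compact space every continuous function is bounded.\<close>

definition feller_semigroup :: "(real \<Rightarrow> ('a::topological_space \<Rightarrow>\<^sub>C real) \<Rightarrow> ('a \<Rightarrow>\<^sub>C real)) \<Rightarrow> bool" where
  "feller_semigroup T \<longleftrightarrow>
     (\<forall>t\<ge>0. linear (T t)) \<and>
     T 0 = id \<and>
     (\<forall>s\<ge>0. \<forall>t\<ge>0. T (s + t) = T s \<circ> T t) \<and>
     (\<forall>f. ((\<lambda>t. T t f) \<longlongrightarrow> f) (at_right 0)) \<and>
     (\<forall>t\<ge>0. \<forall>f. (\<forall>x. 0 \<le> apply_bcontfun f x) \<longrightarrow> (\<forall>x. 0 \<le> apply_bcontfun (T t f) x)) \<and>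
     (\<forall>t\<ge>0. \<forall>f. norm (T t f) \<le> norm f)"

definition gen_dom :: "(real \<Rightarrow> ('a::topological_space \<Rightarrow>\<^sub>C real) \<Rightarrow> ('a \<Rightarrow>\<^sub>C real)) \<Rightarrow> ('a \<Rightarrow>\<^sub>C real) set" where
  "gen_dom T = {f. \<exists>g. ((\<lambda>h. (1 / h) *\<^sub>R (T h f - f)) \<longlongrightarrow> g) (at_right 0)}"

definition gen :: "(real \<Rightarrow> ('a::topological_space \<Rightarrow>\<^sub>C real) \<Rightarrow> ('a \<Rightarrow>\<^sub>C real)) \<Rightarrow> ('a \<Rightarrow>\<^sub>C real) \<Rightarrow> ('a \<Rightarrow>\<^sub>C real)" where
  "gen T f = (THE g. ((\<lambda>h. (1 / h) *\<^sub>R (T h f - f)) \<longlongrightarrow> g) (at_right 0))"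

definition resolvent :: "(real \<Rightarrow> ('a::topological_space \<Rightarrow>\<^sub>C real) \<Rightarrow> ('a \<Rightarrow>\<^sub>C real)) \<Rightarrow> real \<Rightarrow> ('a \<Rightarrow>\<^sub>C real) \<Rightarrow> ('a \<Rightarrow>\<^sub>C real)" where
  "resolvent T lam f = (THE g. g \<in> gen_dom T \<and> lam *\<^sub>R g - gen T g = f)"

definition exit_law_LT :: "(real \<Rightarrow> ('a::topological_space \<Rightarrow>\<^sub>C real) \<Rightarrow> ('a \<Rightarrow>\<^sub>C real)) \<Rightarrow> (real \<Rightarrow> ('a \<Rightarrow>\<^sub>C real)) \<Rightarrow> bool" where
  "exit_law_LT T l \<longleftrightarrow>
     (\<forall>a b. 0 < a \<longrightarrow> a \<le> b \<longrightarrow> bounded (l ` {a..b})) \<and>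
     (\<forall>lam>0. \<forall>x. 0 \<le> apply_bcontfun (l lam) x) \<and>
     (\<exists>lam>0. l lam \<noteq> 0) \<and>
     (\<forall>x. \<exists>L. ((\<lambda>lam. apply_bcontfun (l lam) x) \<longlongrightarrow> L) (at_right 0) \<and> L \<le> 1) \<and>
     (\<forall>lam>0. \<forall>mu>0. (lam - mu) *\<^sub>R resolvent T lam (l mu) = l mu - l lam)"

end

theory Submission imports Defs "HOL-Real_Asymp.Real_Asymp" begin

instance bcontfun :: (metric_space, banach) banach ..


lemma fel_bl: assumes "feller_semigroup T" "0 \<le> t" shows "bounded_linear (T t)"
proof -
  have l: "linear (T t)" and n: "\<And>x. norm (T t x) \<le> norm x" using assms unfolding feller_semigroup_def by auto
  show ?thesis
    apply (rule bounded_linear_intro[where K=1])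
    using l n by (auto simp: linear_add linear_scale)
qed

lemma fel_norm: "feller_semigroup T \<Longrightarrow> 0 \<le> t \<Longrightarrow> norm (T t x) \<le> norm x"
  unfolding feller_semigroup_def by auto

lemma fel_comp: "feller_semigroup T \<Longrightarrow> 0 \<le> s \<Longrightarrow> 0 \<le> t \<Longrightarrow> T s (T t x) = T (s + t) x"
  unfolding feller_semigroup_def by (metis comp_apply)

lemma fel_id: "feller_semigroup T \<Longrightarrow> T 0 x = x"
  unfolding feller_semigroup_def by auto

lemma fel_right: "feller_semigroup T \<Longrightarrow> ((\<lambda>t. T t f) \<longlongrightarrow> f) (at_right 0)"
  unfolding feller_semigroup_def by auto

lemma fel_delta:
  assumes "feller_semigroup T" "e > 0"
  shows "\<exists>d>0. \<forall>h. 0 \<le> h \<and> h \<le> d \<longrightarrow> norm (T h f - f) < e"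
proof -
  have "eventually (\<lambda>t. dist (T t f) f < e) (at_right 0)"
    using fel_right[OF assms(1)] assms(2) tendstoD by blast
  then obtain d where d: "d > 0" "\<And>t. 0 < t \<Longrightarrow> t < d \<Longrightarrow> dist (T t f) f < e"
    unfolding eventually_at_right_field by auto
  show ?thesis
  proof (intro exI[of _ "d/2"] conjI allI impI)
    fix h assume h: "0 \<le> h \<and> h \<le> d/2"
    show "norm (T h f - f) < e"
    proof (cases "h = 0")
      case True then show ?thesis using fel_id[OF assms(1)] assms(2) by simp
    next
      case False then show ?thesis using d h by (auto simp: dist_norm)
    qed
  qed (use d in auto)
qed

lemma fel_cont:
  assumes fel: "feller_semigroup T"
  shows "continuous_on {0..} (\<lambda>t. T t f)"
  unfolding continuous_on_iff
proof (intro ballI allI impI)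
  fix s e :: real assume s: "s \<in> {0..}" and e: "0 < e"
  obtain d where d: "d > 0" "\<And>h. 0 \<le> h \<Longrightarrow> h \<le> d \<Longrightarrow> norm (T h f - f) < e"
    using fel_delta[OF fel e] by blast
  show "\<exists>d>0. \<forall>x'\<in>{0..}. dist x' s < d \<longrightarrow> dist (T x' f) (T s f) < e"
  proof (intro exI[of _ d] conjI ballI impI)
    fix t :: real assume t: "t \<in> {0..}" and dt: "dist t s < d"
    show "dist (T t f) (T s f) < e"
    proof (cases "s \<le> t")
      case True
      have "T t f - T s f = T s (T (t - s) f - f)"
        using fel_comp[OF fel, of s "t - s" f] s True linear_diff[OF bounded_linear.linear[OF fel_bl[OF fel, of s]]] by auto
      also have "norm \<dots> \<le> norm (T (t - s) f - f)" using fel_norm[OF fel] s by auto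
      also have "\<dots> < e" using d(2)[of "t - s"] True dt by (auto simp: dist_real_def)
      finally show ?thesis by (simp add: dist_norm)
    next
      case False
      have "T s f - T t f = T t (T (s - t) f - f)"
        using fel_comp[OF fel, of t "s - t" f] t False linear_diff[OF bounded_linear.linear[OF fel_bl[OF fel, of t]]] by auto
      also have "norm \<dots> \<le> norm (T (s - t) f - f)" using fel_norm[OF fel] t by auto
      also have "\<dots> < e" using d(2)[of "s - t"] False dt by (auto simp: dist_real_def)
      finally show ?thesis by (simp add: dist_norm norm_minus_commute)
    qed
  qed (use d in auto)
qed

definition egf :: "(real \<Rightarrow> ('a::metric_space \<Rightarrow>\<^sub>C real) \<Rightarrow> ('a \<Rightarrow>\<^sub>C real)) \<Rightarrow> ('a \<Rightarrow>\<^sub>C real) \<Rightarrow> real \<Rightarrow> real \<Rightarrow> ('a \<Rightarrow>\<^sub>C real)" where "egf T f lam t = exp (-lam * t) *\<^sub>R T t f"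
definition Jint :: "(real \<Rightarrow> ('a::metric_space \<Rightarrow>\<^sub>C real) \<Rightarrow> ('a \<Rightarrow>\<^sub>C real)) \<Rightarrow> ('a \<Rightarrow>\<^sub>C real) \<Rightarrow> real \<Rightarrow> real \<Rightarrow> ('a \<Rightarrow>\<^sub>C real)" where "Jint T f lam x = integral {0..x} (egf T f lam)"

lemma egf_cont: "feller_semigroup T \<Longrightarrow> continuous_on {0..} (egf T f lam)"
  unfolding egf_def by (intro continuous_intros fel_cont)

lemma egf_int: "feller_semigroup T \<Longrightarrow> 0 \<le> a \<Longrightarrow> egf T f lam integrable_on {a..b}"
proof -
  assume "feller_semigroup T" "0 \<le> a"
  then have "continuous_on {a..b} (egf T f lam)"
    by (intro continuous_on_subset[OF egf_cont]) auto
  then show ?thesis by (rule integrable_continuous_interval)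
qed

lemma egf_norm: "feller_semigroup T \<Longrightarrow> 0 \<le> t \<Longrightarrow> norm (egf T f lam t) \<le> exp (-lam * t) * norm f"
  unfolding egf_def using fel_norm[of T t f] by (simp add: mult_left_mono)

lemma exp_int:
  fixes a b lam :: real
  assumes "a \<le> b" "lam \<noteq> 0"
  shows "((\<lambda>t. exp (-lam * t)) has_integral (exp (-lam * a) - exp (-lam * b)) / lam) {a..b}"
proof -
  have "((\<lambda>t. exp (-lam * t)) has_integral ((- exp (-lam * b) / lam) - (- exp (-lam * a) / lam))) {a..b}"
    apply (rule fundamental_theorem_of_calculus[OF assms(1)])
    apply (rule has_vector_derivative_within_subset[where S=UNIV])
    using assms(2) by (auto intro!: derivative_eq_intros simp: has_real_derivative_iff_has_vector_derivative[symmetric])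
  then show ?thesis by (simp add: diff_divide_distrib)
qed

lemma Jdiff: "feller_semigroup T \<Longrightarrow> 0 \<le> a \<Longrightarrow> a \<le> b \<Longrightarrow> Jint T f lam b - Jint T f lam a = integral {a..b} (egf T f lam)"
  unfolding Jint_def using Henstock_Kurzweil_Integration.integral_combine[where a=0 and c=a and b=b and f="egf T f lam"] egf_int[of T 0 f lam b]
  by (simp add: algebra_simps)

lemma Jbound:
  assumes fel: "feller_semigroup T" and "0 \<le> a" "a \<le> b" "lam > 0"
  shows "norm (Jint T f lam b - Jint T f lam a) \<le> norm f * exp (-lam * a) / lam"
proof -
  have i: "((\<lambda>t. exp (-lam * t) * norm f) has_integral (exp (-lam * a) - exp (-lam * b)) / lam * norm f) {a..b}"
    using has_integral_mult_left[OF exp_int[of a b lam]] assms by auto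
  have "norm (integral {a..b} (egf T f lam)) \<le> integral {a..b} (\<lambda>t. exp (-lam * t) * norm f)"
    apply (rule Henstock_Kurzweil_Integration.integral_norm_bound_integral[OF egf_int[OF fel assms(2)]])
    using i apply blast
    using egf_norm[OF fel] assms by auto
  also have "\<dots> = (exp (-lam * a) - exp (-lam * b)) / lam * norm f" using i by (rule integral_unique)
  also have "\<dots> \<le> norm f * exp (-lam * a) / lam" using assms
    by (simp add: divide_right_mono mult.commute mult_left_mono)
  finally show ?thesis using Jdiff[OF fel assms(2,3)] by simp
qed

lemma exp_seq0: "(lam::real) > 0 \<Longrightarrow> (\<lambda>n::nat. exp (-lam * real n)) \<longlonglongrightarrow> 0"
proof -
  assume l: "lam > 0"
  have "(\<lambda>n. exp (-lam) ^ n) \<longlonglongrightarrow> 0" using l by (intro LIMSEQ_power_zero) auto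
  moreover have "exp (-lam) ^ n = exp (-lam * real n)" for n
    by (metis exp_of_nat_mult mult.commute)
  ultimately show ?thesis by simp
qed

lemma le_zero_exp:
  assumes "(lam::real) > 0" "eventually (\<lambda>n. D \<le> K * exp (-lam * real n)) sequentially"
  shows "D \<le> 0"
proof -
  have "(\<lambda>n. K * exp (-lam * real n)) \<longlonglongrightarrow> K * 0"
    by (intro tendsto_mult tendsto_const exp_seq0 assms(1))
  then show ?thesis using assms(2) by (intro tendsto_lowerbound[where F=sequentially]) auto
qed

definition Rlap :: "(real \<Rightarrow> ('a::metric_space \<Rightarrow>\<^sub>C real) \<Rightarrow> ('a \<Rightarrow>\<^sub>C real)) \<Rightarrow> ('a \<Rightarrow>\<^sub>C real) \<Rightarrow> real \<Rightarrow> ('a \<Rightarrow>\<^sub>C real)" where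
  "Rlap T f lam = lim (\<lambda>n::nat. Jint T f lam (real n))"

lemma Rlap_conv:
  assumes fel: "feller_semigroup T" and l: "lam > 0"
  shows "(\<lambda>n. Jint T f lam (real n)) \<longlonglongrightarrow> Rlap T f lam"
proof -
  have "Cauchy (\<lambda>n. Jint T f lam (real n))"
  proof (rule metric_CauchyI)
    fix e :: real assume e: "e > 0"
    have "(\<lambda>n. norm f / lam * exp (-lam * real n)) \<longlonglongrightarrow> norm f / lam * 0"
      by (intro tendsto_mult tendsto_const exp_seq0 l)
    then have "eventually (\<lambda>n. norm f / lam * exp (-lam * real n) < e) sequentially"
      using e by (simp add: order_tendstoD(2))
    then obtain M where M: "\<And>n. n \<ge> M \<Longrightarrow> norm f / lam * exp (-lam * real n) < e"
      unfolding eventually_sequentially by auto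
    show "\<exists>M. \<forall>m\<ge>M. \<forall>n\<ge>M. dist (Jint T f lam (real m)) (Jint T f lam (real n)) < e"
    proof (intro exI[of _ M] allI impI)
      fix m n assume mn: "M \<le> m" "M \<le> n"
      have key: "dist (Jint T f lam (real m)) (Jint T f lam (real n)) < e" if "n \<le> m" "M \<le> n" for m n
      proof -
        have "dist (Jint T f lam (real m)) (Jint T f lam (real n)) \<le> norm f * exp (-lam * real n) / lam"
          unfolding dist_norm by (rule Jbound[OF fel _ _ l]) (use that in auto)
        also have "\<dots> < e" using M[OF that(2)] by simp
        finally show ?thesis .
      qed
      show "dist (Jint T f lam (real m)) (Jint T f lam (real n)) < e"
      proof (cases "n \<le> m")
        case True then show ?thesis using key mn by auto
      next
        case False then show ?thesis using key[of m n] mn by (simp add: dist_commute)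
      qed
    qed
  qed
  then show ?thesis unfolding Rlap_def by (simp add: Cauchy_convergent_iff convergent_LIMSEQ_iff)
qed

lemma Rlap_tail:
  assumes fel: "feller_semigroup T" and l: "lam > 0" and x: "0 \<le> x"
  shows "norm (Rlap T f lam - Jint T f lam x) \<le> norm f * exp (-lam * x) / lam"
proof -
  have "(\<lambda>n. norm (Jint T f lam (real n) - Jint T f lam x)) \<longlonglongrightarrow> norm (Rlap T f lam - Jint T f lam x)"
    by (intro tendsto_norm tendsto_diff Rlap_conv[OF fel l] tendsto_const)
  moreover have "eventually (\<lambda>n. norm (Jint T f lam (real n) - Jint T f lam x) \<le> norm f * exp (-lam * x) / lam) sequentially"
    unfolding eventually_sequentially
  proof (intro exI[of _ "nat \<lceil>x\<rceil>"] allI impI)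
    fix n assume "nat \<lceil>x\<rceil> \<le> n"
    then have "x \<le> real n" by linarith
    then show "norm (Jint T f lam (real n) - Jint T f lam x) \<le> norm f * exp (-lam * x) / lam"
      by (intro Jbound[OF fel x _ l])
  qed
  ultimately show ?thesis by (intro tendsto_upperbound[where F=sequentially]) auto
qed

lemma shiftJ:
  assumes fel: "feller_semigroup T" and h: "0 \<le> h" and x: "0 \<le> x"
  shows "T h (Jint T f lam x) = exp (lam * h) *\<^sub>R (Jint T f lam (x + h) - Jint T f lam h)"
proof -
  have "T h (Jint T f lam x) = integral {0..x} (T h \<circ> egf T f lam)"
    unfolding Jint_def by (rule integral_linear[symmetric, OF egf_int[OF fel] fel_bl[OF fel h]]) simp
  also have "\<dots> = integral {0..x} (\<lambda>t. exp (lam * h) *\<^sub>R egf T f lam (t + h))"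
  proof (rule integral_cong)
    fix t assume t: "t \<in> {0..x}"
    have "(T h \<circ> egf T f lam) t = exp (-lam * t) *\<^sub>R T h (T t f)"
      unfolding egf_def using linear_scale[OF bounded_linear.linear[OF fel_bl[OF fel h]]] by simp
    also have "\<dots> = exp (-lam * t) *\<^sub>R T (t + h) f" using fel_comp[OF fel h, of t f] t by (simp add: add.commute)
    also have "\<dots> = exp (lam * h) *\<^sub>R egf T f lam (t + h)"
      unfolding egf_def by (simp add: exp_add[symmetric] algebra_simps)
    finally show "(T h \<circ> egf T f lam) t = exp (lam * h) *\<^sub>R egf T f lam (t + h)" .
  qed
  also have "\<dots> = exp (lam * h) *\<^sub>R integral {h - h..(x + h) - h} (\<lambda>t. egf T f lam (t + h))"
    by simp
  also have "\<dots> = exp (lam * h) *\<^sub>R integral {h..x + h} (egf T f lam)"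
    by (subst integral_shift_real_ivl) simp
  also have "\<dots> = exp (lam * h) *\<^sub>R (Jint T f lam (x + h) - Jint T f lam h)"
    using Jdiff[OF fel h, of "x + h" f lam] x by simp
  finally show ?thesis .
qed

lemma shiftR:
  assumes fel: "feller_semigroup T" and h: "0 \<le> h" and l: "lam > 0"
  shows "T h (Rlap T f lam) = exp (lam * h) *\<^sub>R (Rlap T f lam - Jint T f lam h)"
proof -
  let ?R = "Rlap T f lam" and ?J = "Jint T f lam" and ?e = "exp (lam * h)"
  have "norm (T h ?R - ?e *\<^sub>R (?R - ?J h)) - 0 \<le> 0"
  proof (rule le_zero_exp[OF l, where K = "2 * norm f / lam"], rule always_eventually, rule allI)
    fix n :: nat
    have lin: "linear (T h)" using bounded_linear.linear[OF fel_bl[OF fel h]] .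
    have "T h ?R - ?e *\<^sub>R (?R - ?J h) = T h (?R - ?J (real n)) + T h (?J (real n)) - ?e *\<^sub>R (?R - ?J h)"
      using linear_diff[OF lin] by simp
    also have "\<dots> = T h (?R - ?J (real n)) + ?e *\<^sub>R (?J (real n + h) - ?R)"
      using shiftJ[OF fel h, of "real n" f lam] by (simp add: algebra_simps)
    finally have eq: "T h ?R - ?e *\<^sub>R (?R - ?J h) = T h (?R - ?J (real n)) - ?e *\<^sub>R (?R - ?J (real n + h))"
      by (simp add: algebra_simps)
    have "norm (T h ?R - ?e *\<^sub>R (?R - ?J h)) \<le> norm (T h (?R - ?J (real n))) + ?e * norm (?R - ?J (real n + h))"
      unfolding eq using norm_triangle_ineq4 by (metis abs_exp_cancel norm_scaleR)
    also have "\<dots> \<le> norm f * exp (-lam * real n) / lam + ?e * (norm f * exp (-lam * (real n + h)) / lam)"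
      apply (intro add_mono order.trans[OF fel_norm[OF fel h]] Rlap_tail[OF fel l] mult_left_mono)
      using h by auto
    also have "?e * (norm f * exp (-lam * (real n + h)) / lam) = norm f * exp (-lam * real n) / lam"
      by (simp add: algebra_simps exp_add[symmetric])
    finally show "norm (T h ?R - ?e *\<^sub>R (?R - ?J h)) - 0 \<le> 2 * norm f / lam * exp (-lam * real n)"
      by simp
  qed
  then show ?thesis by simp
qed

lemma J_deriv:
  assumes fel: "feller_semigroup T"
  shows "((\<lambda>y. (1 / y) *\<^sub>R Jint T f lam y) \<longlongrightarrow> f) (at_right 0)"
proof -
  have "((\<lambda>u. integral {0..u} (egf T f lam)) has_vector_derivative egf T f lam 0) (at 0 within {0..1})"
    by (rule integral_has_vector_derivative, rule continuous_on_subset[OF egf_cont[OF fel]]) auto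
  then have d: "(Jint T f lam has_vector_derivative f) (at_right 0)"
    using at_within_Icc_at_right[of "0::real" 1] fel_id[OF fel]
    unfolding Jint_def[abs_def] egf_def by simp
  have "((\<lambda>y. (1 / norm (y - 0)) *\<^sub>R (Jint T f lam y - (Jint T f lam 0 + (y - 0) *\<^sub>R f))) \<longlongrightarrow> 0) (at_right 0)"
    using d unfolding has_vector_derivative_def has_derivative_within by blast
  then have "((\<lambda>y. (1 / y) *\<^sub>R Jint T f lam y - f) \<longlongrightarrow> 0) (at_right 0)"
  proof (rule Lim_transform_eventually)
    show "\<forall>\<^sub>F y in at_right 0. (1 / norm (y - 0)) *\<^sub>R (Jint T f lam y - (Jint T f lam 0 + (y - 0) *\<^sub>R f)) = (1 / y) *\<^sub>R Jint T f lam y - f"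
      using eventually_at_right_less[of "0::real"]
      by eventually_elim (simp add: Jint_def algebra_simps)
  qed
  then show ?thesis using Lim_null by blast
qed

lemma Rlap_gen:
  assumes fel: "feller_semigroup T" and l: "lam > 0"
  shows "((\<lambda>h. (1 / h) *\<^sub>R (T h (Rlap T f lam) - Rlap T f lam)) \<longlongrightarrow> lam *\<^sub>R Rlap T f lam - f) (at_right 0)"
proof -
  let ?R = "Rlap T f lam" and ?J = "Jint T f lam"
  have a: "((\<lambda>h. (exp (lam * h) - 1) / h) \<longlongrightarrow> lam) (at_right 0)"
  proof -
    have "((\<lambda>h. exp (lam * h)) has_field_derivative lam) (at 0 within {0<..})"
      by (auto intro!: derivative_eq_intros)
    then show ?thesis unfolding has_field_derivative_iff by simp
  qed
  have b: "((\<lambda>h. exp (lam * h)) \<longlongrightarrow> 1) (at_right 0)"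
  proof -
    have "((\<lambda>h. exp (lam * h)) \<longlongrightarrow> exp (lam * 0)) (at_right 0)"
      by (intro tendsto_intros)
    then show ?thesis by simp
  qed
  have lim: "((\<lambda>h. ((exp (lam * h) - 1) / h) *\<^sub>R ?R - exp (lam * h) *\<^sub>R ((1 / h) *\<^sub>R ?J h)) \<longlongrightarrow> lam *\<^sub>R ?R - 1 *\<^sub>R f) (at_right 0)"
    by (intro tendsto_intros a b J_deriv[OF fel])
  show ?thesis
  proof (rule Lim_transform_eventually[OF lim[unfolded scaleR_one]])
    show "\<forall>\<^sub>F h in at_right 0. ((exp (lam * h) - 1) / h) *\<^sub>R ?R - exp (lam * h) *\<^sub>R ((1 / h) *\<^sub>R ?J h) = (1 / h) *\<^sub>R (T h ?R - ?R)"
      using eventually_at_right_less[of "0::real"]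
    proof eventually_elim
      case (elim h)
      have E: "T h ?R = exp (lam * h) *\<^sub>R ?R - exp (lam * h) *\<^sub>R ?J h"
        using shiftR[OF fel _ l, of h f] elim by (simp add: scaleR_diff_right)
      show ?case unfolding E
        by (simp add: scaleR_diff_right scaleR_diff_left scaleR_scaleR diff_divide_distrib)
    qed
  qed
qed

lemma dissip:
  assumes fel: "feller_semigroup T" and l: "lam \<ge> 0"
    and lim: "((\<lambda>h. (1 / h) *\<^sub>R (T h w - w)) \<longlongrightarrow> a) (at_right 0)"
  shows "lam * norm w \<le> norm (lam *\<^sub>R w - a)"
proof (rule tendsto_lowerbound[where F="at_right (0::real)"])
  show "((\<lambda>h. norm (lam *\<^sub>R w - (1 / h) *\<^sub>R (T h w - w))) \<longlongrightarrow> norm (lam *\<^sub>R w - a)) (at_right 0)"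
    by (intro tendsto_intros lim)
  show "\<forall>\<^sub>F h in at_right 0. lam * norm w \<le> norm (lam *\<^sub>R w - (1 / h) *\<^sub>R (T h w - w))"
    using eventually_at_right_less[of "0::real"]
  proof eventually_elim
    case (elim h)
    have eq: "lam *\<^sub>R w - (1 / h) *\<^sub>R (T h w - w) = (lam + 1 / h) *\<^sub>R w - (1 / h) *\<^sub>R T h w"
      by (simp add: algebra_simps)
    have "(lam + 1 / h) * norm w - (1 / h) * norm (T h w) \<le> norm ((lam + 1 / h) *\<^sub>R w - (1 / h) *\<^sub>R T h w)"
      using norm_triangle_ineq2[of "(lam + 1 / h) *\<^sub>R w" "(1 / h) *\<^sub>R T h w"] elim l by simp
    moreover have "(1 / h) * norm (T h w) \<le> (1 / h) * norm w"
      using fel_norm[OF fel, of h w] elim by (intro mult_left_mono) auto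
    ultimately show ?case unfolding eq by (simp add: algebra_simps)
  qed
qed simp

lemma gen_eq:
  assumes lim: "((\<lambda>h. (1 / h) *\<^sub>R (T h w - w)) \<longlongrightarrow> a) (at_right 0)"
  shows "w \<in> gen_dom T" "gen T w = a"
proof -
  show "w \<in> gen_dom T" unfolding gen_dom_def using lim by blast
  show "gen T w = a" unfolding gen_def
    apply (rule the_equality)
     apply (rule lim)
    using tendsto_unique[OF trivial_limit_at_right_real lim] by blast
qed

lemma gen_lim:
  assumes "w \<in> gen_dom T"
  shows "((\<lambda>h. (1 / h) *\<^sub>R (T h w - w)) \<longlongrightarrow> gen T w) (at_right 0)"
proof -
  obtain a where "((\<lambda>h. (1 / h) *\<^sub>R (T h w - w)) \<longlongrightarrow> a) (at_right 0)" using assms unfolding gen_dom_def by blast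
  then show ?thesis using gen_eq(2) by metis
qed

lemma resolvent_eq:
  assumes fel: "feller_semigroup T" and l: "lam > 0"
  shows "resolvent T lam f = Rlap T f lam"
  unfolding resolvent_def
proof (rule the_equality)
  let ?R = "Rlap T f lam"
  have g: "?R \<in> gen_dom T" "gen T ?R = lam *\<^sub>R ?R - f" using gen_eq[where T=T and w="Rlap T f lam", OF Rlap_gen[OF fel l, of f]] by auto
  then show "?R \<in> gen_dom T \<and> lam *\<^sub>R ?R - gen T ?R = f" by simp
  fix g assume a: "g \<in> gen_dom T \<and> lam *\<^sub>R g - gen T g = f"
  have "((\<lambda>h. (1 / h) *\<^sub>R (T h g - g) - (1 / h) *\<^sub>R (T h ?R - ?R)) \<longlongrightarrow> gen T g - (lam *\<^sub>R ?R - f)) (at_right 0)"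
    by (intro tendsto_diff gen_lim Rlap_gen fel l) (use a in auto)
  then have "((\<lambda>h. (1 / h) *\<^sub>R (T h (g - ?R) - (g - ?R))) \<longlongrightarrow> gen T g - (lam *\<^sub>R ?R - f)) (at_right 0)"
  proof (rule Lim_transform_eventually)
    show "\<forall>\<^sub>F h in at_right 0. (1 / h) *\<^sub>R (T h g - g) - (1 / h) *\<^sub>R (T h ?R - ?R) = (1 / h) *\<^sub>R (T h (g - ?R) - (g - ?R))"
      using eventually_at_right_less[of "0::real"]
    proof eventually_elim
      case (elim h)
      have E: "T h (g - ?R) = T h g - T h ?R"
        using linear_diff[OF bounded_linear.linear[OF fel_bl[OF fel, of h]]] elim by simp
      show ?case unfolding E by (simp add: scaleR_diff_right)
    qed
  qed
  from dissip[OF fel _ this] l have "lam * norm (g - ?R) \<le> norm (lam *\<^sub>R (g - ?R) - (gen T g - (lam *\<^sub>R ?R - f)))"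
    by simp
  also have "lam *\<^sub>R (g - ?R) - (gen T g - (lam *\<^sub>R ?R - f)) = 0"
    using a by (simp add: algebra_simps)
  finally show "g = ?R" using l by (simp add: mult_le_0_iff)
qed

lemma Rlap_norm:
  assumes fel: "feller_semigroup T" and l: "lam > 0"
  shows "lam * norm (Rlap T f lam) \<le> norm f"
  using dissip[OF fel _ Rlap_gen[OF fel l, of f], of lam] l by simp

lemma lamexp_int:
  fixes a b lam c :: real
  assumes "a \<le> b" "lam > 0"
  shows "((\<lambda>t. lam * exp (-lam * t) * c) has_integral (exp (-lam * a) - exp (-lam * b)) * c) {a..b}"
proof -
  have "((\<lambda>t. lam * (exp (-lam * t) * c)) has_integral lam * ((exp (-lam * a) - exp (-lam * b)) / lam * c)) {a..b}"
    by (intro has_integral_mult_right has_integral_mult_left exp_int) (use assms in auto)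
  then show ?thesis using assms by (simp add: mult.assoc)
qed

lemma phi_int:
  assumes fel: "feller_semigroup T" and a: "0 \<le> a" and ab: "a \<le> b" and l: "lam > 0"
  shows "((\<lambda>t. lam *\<^sub>R egf T f lam t - (lam * exp (-lam * t)) *\<^sub>R f) has_integral
          lam *\<^sub>R integral {a..b} (egf T f lam) - (exp (-lam * a) - exp (-lam * b)) *\<^sub>R f) {a..b}"
proof (intro has_integral_diff)
  show "((\<lambda>t. lam *\<^sub>R egf T f lam t) has_integral lam *\<^sub>R integral {a..b} (egf T f lam)) {a..b}"
    by (intro has_integral_cmul integrable_integral egf_int[OF fel a])
  show "((\<lambda>t. (lam * exp (-lam * t)) *\<^sub>R f) has_integral (exp (-lam * a) - exp (-lam * b)) *\<^sub>R f) {a..b}"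
    using has_integral_scaleR_left[OF lamexp_int[OF ab l, of 1], of f] by simp
qed

lemma approx:
  assumes fel: "feller_semigroup T" and l: "lam > 0" and d: "d > 0"
    and eps: "\<And>t. 0 \<le> t \<Longrightarrow> t \<le> d \<Longrightarrow> norm (T t f - f) \<le> eps"
  shows "norm (lam *\<^sub>R Rlap T f lam - f) \<le> eps + 2 * norm f * exp (-lam * d)"
proof -
  let ?R = "Rlap T f lam" and ?J = "Jint T f lam"
  define phi where "phi t = lam *\<^sub>R egf T f lam t - (lam * exp (-lam * t)) *\<^sub>R f" for t
  have phi_eq: "phi t = (lam * exp (-lam * t)) *\<^sub>R (T t f - f)" for t
    unfolding phi_def egf_def by (simp add: algebra_simps)
  have "norm (lam *\<^sub>R ?R - f) - (eps + 2 * norm f * exp (-lam * d)) \<le> 0"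
  proof (rule le_zero_exp[OF l, where K = "2 * norm f"])
    show "\<forall>\<^sub>F n in sequentially. norm (lam *\<^sub>R ?R - f) - (eps + 2 * norm f * exp (-lam * d)) \<le> 2 * norm f * exp (-lam * real n)"
      unfolding eventually_sequentially
    proof (intro exI[of _ "nat \<lceil>d\<rceil>"] allI impI)
      fix n assume "nat \<lceil>d\<rceil> \<le> n"
      then have dn: "d \<le> real n" by linarith
      let ?n = "real n"
      have i0n: "(phi has_integral lam *\<^sub>R ?J ?n - (exp (-lam * 0) - exp (-lam * ?n)) *\<^sub>R f) {0..?n}"
        using phi_int[OF fel _ _ l, of 0 ?n f] unfolding phi_def[abs_def] Jint_def by simp
      have intd: "phi integrable_on {0..d}" and intn: "phi integrable_on {d..?n}"
        using phi_int[OF fel _ _ l, of 0 d f] phi_int[OF fel _ _ l, of d ?n f] d dn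
        unfolding phi_def[abs_def] by (auto intro: has_integral_integrable)
      have split: "lam *\<^sub>R ?J ?n - (1 - exp (-lam * ?n)) *\<^sub>R f = integral {0..d} phi + integral {d..?n} phi"
        using Henstock_Kurzweil_Integration.integral_combine[where a=0 and c=d and b="?n" and f=phi] i0n d dn
        by (auto simp: integral_unique intro: has_integral_integrable)
      have b1: "norm (integral {0..d} phi) \<le> eps"
      proof -
        have ie: "((\<lambda>t. lam * exp (-lam * t) * eps) has_integral (exp (-lam * 0) - exp (-lam * d)) * eps) {0..d}"
          using lamexp_int[of 0 d lam eps] d l by simp
        have "norm (integral {0..d} phi) \<le> integral {0..d} (\<lambda>t. lam * exp (-lam * t) * eps)"
          apply (rule Henstock_Kurzweil_Integration.integral_norm_bound_integral[OF intd])
          using ie apply blast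
          unfolding phi_eq using eps l by (auto intro: mult_left_mono)
        also have "\<dots> = (exp (-lam * 0) - exp (-lam * d)) * eps" by (rule integral_unique[OF ie])
        also have "\<dots> \<le> eps"
        proof -
          have "0 \<le> eps" using eps[of 0] fel_id[OF fel] d by simp
          moreover have "0 \<le> exp (-lam * d) * eps" using calculation by simp
          ultimately show ?thesis by (simp add: algebra_simps)
        qed
        finally show ?thesis .
      qed
      have b2: "norm (integral {d..?n} phi) \<le> 2 * norm f * exp (-lam * d)"
      proof -
        have ie: "((\<lambda>t. lam * exp (-lam * t) * (2 * norm f)) has_integral (exp (-lam * d) - exp (-lam * ?n)) * (2 * norm f)) {d..?n}"
          using lamexp_int[of d ?n lam "2 * norm f"] dn l by simp
        have "norm (integral {d..?n} phi) \<le> integral {d..?n} (\<lambda>t. lam * exp (-lam * t) * (2 * norm f))"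
          apply (rule Henstock_Kurzweil_Integration.integral_norm_bound_integral[OF intn])
          using ie apply blast
        proof -
          fix t assume t: "t \<in> {d..?n}"
          have "norm (T t f - f) \<le> norm (T t f) + norm f" by (rule norm_triangle_ineq4)
          also have "\<dots> \<le> 2 * norm f" using fel_norm[OF fel, of t f] t d by auto
          finally show "norm (phi t) \<le> lam * exp (-lam * t) * (2 * norm f)"
            unfolding phi_eq using l by (simp add: mult_left_mono)
        qed
        also have "\<dots> = (exp (-lam * d) - exp (-lam * ?n)) * (2 * norm f)" by (rule integral_unique[OF ie])
        also have "\<dots> \<le> 2 * norm f * exp (-lam * d)" by (simp add: algebra_simps)
        finally show ?thesis .
      qed
      have eq: "lam *\<^sub>R ?R - f = lam *\<^sub>R (?R - ?J ?n) + (lam *\<^sub>R ?J ?n - (1 - exp (-lam * ?n)) *\<^sub>R f) - exp (-lam * ?n) *\<^sub>R f"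
        by (simp add: algebra_simps)
      have "norm (lam *\<^sub>R ?R - f) \<le> lam * norm (?R - ?J ?n) + norm (lam *\<^sub>R ?J ?n - (1 - exp (-lam * ?n)) *\<^sub>R f) + exp (-lam * ?n) * norm f"
        unfolding eq using l
        by (smt (verit) norm_scaleR norm_triangle_ineq norm_triangle_ineq4 abs_exp_cancel)
      also have "lam * norm (?R - ?J ?n) \<le> norm f * exp (-lam * ?n)"
        using mult_left_mono[OF Rlap_tail[OF fel l, of ?n f], of lam] l by simp
      also have "norm (lam *\<^sub>R ?J ?n - (1 - exp (-lam * ?n)) *\<^sub>R f) \<le> eps + 2 * norm f * exp (-lam * d)"
        unfolding split using b1 b2 norm_triangle_ineq by (smt (verit))
      finally show "norm (lam *\<^sub>R ?R - f) - (eps + 2 * norm f * exp (-lam * d)) \<le> 2 * norm f * exp (-lam * ?n)"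
        by simp
    qed
  qed
  then show ?thesis by simp
qed

lemma aux_lim:
  fixes c d :: real assumes "d > 0"
  shows "((\<lambda>x. 2 * c * exp (-x * d) + c / x) \<longlongrightarrow> 0) at_top"
  using assms by real_asymp

theorem corollary1:
  fixes T :: "real \<Rightarrow> ('a::metric_space \<Rightarrow>\<^sub>C real) \<Rightarrow> ('a \<Rightarrow>\<^sub>C real)"
    and l :: "real \<Rightarrow> ('a \<Rightarrow>\<^sub>C real)"
  assumes "compact (UNIV :: 'a set)"
    and "feller_semigroup T"
    and "exit_law_LT T l"
  shows "(l \<longlongrightarrow> 0) at_top"
proof -
  have fel: "feller_semigroup T" by fact
  have ex: "\<And>lam mu. lam > 0 \<Longrightarrow> mu > 0 \<Longrightarrow> (lam - mu) *\<^sub>R resolvent T lam (l mu) = l mu - l lam"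
    using assms(3) unfolding exit_law_LT_def by blast
  define u where "u = l 1"
  have lform: "l lam = (u - lam *\<^sub>R Rlap T u lam) + Rlap T u lam" if "lam > 0" for lam
    using ex[OF that, of 1] resolvent_eq[OF fel that, of u] unfolding u_def
    by (simp add: algebra_simps)
  show ?thesis
  proof (rule tendstoI)
    fix e :: real assume e: "e > 0"
    obtain d where d: "d > 0" "\<And>h. 0 \<le> h \<Longrightarrow> h \<le> d \<Longrightarrow> norm (T h u - u) < e / 2"
      using fel_delta[OF fel, of "e / 2" u] e by auto
    have "eventually (\<lambda>x. 2 * norm u * exp (-x * d) + norm u / x < e / 2) at_top"
      by (rule order_tendstoD(2)[OF aux_lim[OF d(1)]]) (use e in simp)
    moreover have "eventually (\<lambda>x::real. x > 0) at_top" by (rule eventually_gt_at_top)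
    ultimately show "eventually (\<lambda>x. dist (l x) 0 < e) at_top"
    proof eventually_elim
      case (elim lam)
      have a: "norm (lam *\<^sub>R Rlap T u lam - u) \<le> e / 2 + 2 * norm u * exp (-lam * d)"
        using approx[OF fel elim(2) d(1), of u "e / 2"] d(2) by (simp add: less_imp_le)
      have b: "norm (Rlap T u lam) \<le> norm u / lam"
        using Rlap_norm[OF fel elim(2), of u] elim(2) by (simp add: field_simps)
      have "norm (l lam) \<le> norm (lam *\<^sub>R Rlap T u lam - u) + norm (Rlap T u lam)"
        unfolding lform[OF elim(2)] by (metis norm_minus_commute norm_triangle_ineq)
      also have "\<dots> \<le> e / 2 + (2 * norm u * exp (-lam * d) + norm u / lam)" using a b by simp
      also have "\<dots> < e" using elim(1) by linarith
      finally show ?case by simp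
    qed
  qed
qed

end
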